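(* Let $n\ge 2$, $q\in\left(2,\frac{2n}{n-1}\right)$, and let $\lambda_1=\frac{4(n+1)}{q-2}$. Let $s\mapsto (w(s),\lambda(s))$, defined for $s$ near $0$, be the curve of nontrivial solutions of $S(w,\lambda)=0$ bifurcating from $(0,\lambda_1)$, written as $w(s)=s\varphi_1+\beta_1(s)$ with $\lambda(0)=\lambda_1$, $\beta_1(0)=0=\beta_1'(0)$. Then $\lambda'(0)\neq 0$.
   Context: $\mathbb{C}\mathbf{P}^n$ carries the Fubini–Study metric $g_{FS}$ normalized so that the eigenvalues of $-\Delta_{g_{FS}}$ are $4k(k+n)$, $k\ge0$. $U(n)$ acts on $\mathbb{C}\mathbf{P}^n$ by $A\cdot[z_0:z_1:\dots:z_n]=[z_0:A(z_1,\dots,z_n)]$, with quotient map $f:\mathbb{C}\mathbf{P}^n\to[0,\pi/2]$ the distance to $[1:0:\dots:0]$. $X_I$ denotes the $U(n)$-invariant functions, $C^{k,\alpha}(X_I)=X_I\cap C^{k,\alpha}(\mathbb{C}\mathbf{P}^n)$, and $S:C^{2,\alpha}(X_I)\times\mathbb{R}_{\ge0}\to C^{0,\alpha}(X_I)$ is $S(w,\lambda)=-\Delta_{g_{FS}}w+\lambda\big(w+1-(w+1)^{q-1}\big)$ (so $u=w+1$ solves $-\Delta u+\lambda u=\lambda u^{q-1}$). Here $\varphi_1=\left(\frac{n+1}{n}\cos^2 r-\frac1n\right)\circ f$ spans the kernel of the linearization $v\mapsto -\Delta_{g_{FS}}v-\lambda_1(q-2)v$ on $C^{2,\alpha}(X_I)$,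 and $(w(s),\lambda(s))$ is the (differentiable) Crandall–Rabinowitz curve of nontrivial solutions through $(0,\lambda_1)$, with $\beta_1(s)$ in a complement of $\mathrm{span}(\varphi_1)$. *)

theory Defs
  imports "HOL-Analysis.Analysis"
begin

text \<open>Model of CP^n: functions on CP^n are represented by their lifts to the unit sphere
  S^{2n+1} in complex^'k (CARD('k) = n+1) under the Hopf map.  Smoothness, Hoelder norms and the
  Fubini-Study Laplacian are computed through the degree-0 homogeneous extension to R^{2n+2}.\<close>

definition sph_ext :: "('a::real_normed_vector \<Rightarrow> real) \<Rightarrow> 'a \<Rightarrow> real" where
  "sph_ext u = (\<lambda>x. u (x /\<^sub>R norm x))"

definition dderiv :: "'a::real_normed_vector \<Rightarrow> ('a \<Rightarrow> real) \<Rightarrow> 'a \<Rightarrow> real" where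
  "dderiv b g x = deriv (\<lambda>t. g (x + t *\<^sub>R b)) 0"

definition C2_on :: "('a::euclidean_space \<Rightarrow> real) \<Rightarrow> 'a set \<Rightarrow> bool" where
  "C2_on g U \<longleftrightarrow> continuous_on U g \<and>
     (\<forall>b\<in>Basis. (\<forall>x\<in>U. (\<lambda>t. g (x + t *\<^sub>R b)) field_differentiable (at 0)) \<and>
        continuous_on U (dderiv b g) \<and>
        (\<forall>c\<in>Basis. (\<forall>x\<in>U. (\<lambda>t. dderiv b g (x + t *\<^sub>R c)) field_differentiable (at 0)) \<and>
           continuous_on U (dderiv c (dderiv b g))))"

definition holder_quots :: "real \<Rightarrow> 'a::metric_space set \<Rightarrow> ('a \<Rightarrow> real) \<Rightarrow> real set" where
  "holder_quots \<alpha> K h = {\<bar>h x - h y\<bar> / (dist x y powr \<alpha>) | x y. x \<in> K \<and> y \<in> K \<and> x \<noteq> y}"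

definition ann_open :: "'a::real_normed_vector set" where
  "ann_open = {x. 1/4 < norm x \<and> norm x < 4}"

definition ann :: "'a::real_normed_vector set" where
  "ann = {x. 1/2 \<le> norm x \<and> norm x \<le> 2}"

definition supK :: "'a set \<Rightarrow> ('a \<Rightarrow> real) \<Rightarrow> real" where
  "supK K h = Sup ((\<lambda>x. \<bar>h x\<bar>) ` K)"

definition C2a :: "real \<Rightarrow> ('a::euclidean_space \<Rightarrow> real) set" where
  "C2a \<alpha> = {u. C2_on (sph_ext u) ann_open \<and>
      (\<forall>b\<in>Basis. \<forall>c\<in>Basis. bdd_above (holder_quots \<alpha> ann (dderiv c (dderiv b (sph_ext u)))))}"

definition hnorm :: "real \<Rightarrow> ('a::euclidean_space \<Rightarrow> real) \<Rightarrow> real" where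
  "hnorm \<alpha> u = supK ann (sph_ext u) + (\<Sum>b\<in>Basis. supK ann (dderiv b (sph_ext u))) +
     (\<Sum>b\<in>Basis. \<Sum>c\<in>Basis. supK ann (dderiv c (dderiv b (sph_ext u))) +
        Sup (holder_quots \<alpha> ann (dderiv c (dderiv b (sph_ext u)))))"

text \<open>Laplacian of the Fubini-Study metric (= round sphere Laplacian on the Hopf lift).\<close>
definition sph_lap :: "('a::euclidean_space \<Rightarrow> real) \<Rightarrow> 'a \<Rightarrow> real" where
  "sph_lap u x = (\<Sum>b\<in>Basis. dderiv b (dderiv b (sph_ext u)) x)"

text \<open>The quotient map f (distance to [1:0:...:0]) lifted to the sphere.\<close>
definition fdist :: "'k \<Rightarrow> complex^'k \<Rightarrow> real" where
  "fdist i0 x = arccos (cmod (x $ i0))"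

definition XI :: "'k \<Rightarrow> (complex^'k \<Rightarrow> real) set" where
  "XI i0 = {u. \<exists>U. \<forall>x\<in>sphere 0 1. u x = U (fdist i0 x)}"

definition phi1 :: "nat \<Rightarrow> 'k \<Rightarrow> complex^'k \<Rightarrow> real" where
  "phi1 n i0 x = (real n + 1) / real n * (cos (fdist i0 x))\<^sup>2 - 1 / real n"

definition S_op :: "real \<Rightarrow> (complex^'k \<Rightarrow> real) \<Rightarrow> real \<Rightarrow> complex^'k \<Rightarrow> real" where
  "S_op q w lam x = - sph_lap w x + lam * (w x + 1 - (w x + 1) powr (q - 1))"

definition hdiff :: "real \<Rightarrow> 'k \<Rightarrow> (real \<Rightarrow> complex^'k \<Rightarrow> real) \<Rightarrow> real \<Rightarrow> bool" where
  "hdiff \<alpha> i0 w s \<longleftrightarrow> (\<exists>w' \<in> C2a \<alpha> \<inter> XI i0.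
     ((\<lambda>h. hnorm \<alpha> (\<lambda>x. w (s + h) x - w s x - h * w' x) / \<bar>h\<bar>) \<longlongrightarrow> 0) (at 0))"

definition is_complement :: "real \<Rightarrow> 'k \<Rightarrow> (complex^'k \<Rightarrow> real) set \<Rightarrow> (complex^'k \<Rightarrow> real) \<Rightarrow> bool" where
  "is_complement \<alpha> i0 M \<phi> \<longleftrightarrow> M \<subseteq> C2a \<alpha> \<inter> XI i0 \<and> (\<lambda>x. 0) \<in> M \<and>
     (\<forall>u\<in>M. \<forall>v\<in>M. (\<lambda>x. u x + v x) \<in> M) \<and> (\<forall>u\<in>M. \<forall>c. (\<lambda>x. c * u x) \<in> M) \<and>
     (\<forall>u\<in>C2a \<alpha> \<inter> XI i0. \<exists>c. \<exists>m\<in>M. \<forall>x\<in>sphere 0 1. u x = c * \<phi> x + m x) \<and>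
     (\<forall>c. \<forall>m\<in>M. (\<forall>x\<in>sphere 0 1. m x = c * \<phi> x) \<longrightarrow> c = 0)"

end

theory Submission
  imports Defs
begin

definition Nf :: "real \<Rightarrow> real \<Rightarrow> real" where "Nf q v = v + 1 - (v+1) powr (q-1)"

lemma taylorN:
  fixes q :: real
  shows "\<exists>K. \<forall>v::real. \<bar>v\<bar> \<le> 1/2 \<longrightarrow>
     abs (Nf q v + (q-2)* v + (q-1)*(q-2)/2* v^2) \<le> K * \<bar>v\<bar>^3"
proof -
  define K where "K = \<bar>(q-1)*(q-2)*(q-3)\<bar>/6 * ((1/2) powr (q-4) + (3/2) powr (q-4))"
  define diff where "diff = (\<lambda>m::nat. \<lambda>t::real. (\<Prod>i<m. (q-1-real i)) * (1+t) powr (q-1-real m))"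
  have D: "\<forall>m t. m < 3 \<and> -1/2 \<le> t \<and> t \<le> 1/2 \<longrightarrow> DERIV (diff m) t :> diff (Suc m) t"
  proof (intro allI impI)
    fix m :: nat and t :: real assume a: "m < 3 \<and> -1/2 \<le> t \<and> t \<le> 1/2"
    hence pos: "1 + t > 0" by auto
    have "DERIV (\<lambda>t. (1+t) powr (q-1-real m)) t :> (q-1-real m) * (1+t) powr (q-1-real m - 1) * 1"
      by (rule DERIV_fun_powr[of "\<lambda>t. 1+t" _ t, simplified, OF _ pos]) (auto intro!: derivative_eq_intros)
    hence "DERIV (diff m) t :> (\<Prod>i<m. (q-1-real i)) * ((q-1-real m) * (1+t) powr (q-1-real m - 1) * 1)"
      unfolding diff_def by (intro DERIV_cmult)
    thus "DERIV (diff m) t :> diff (Suc m) t"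
      unfolding diff_def by (simp add: algebra_simps)
  qed
  have "abs (Nf q v + (q-2)* v + (q-1)*(q-2)/2* v^2) \<le> K * \<bar>v\<bar>^3"
    if v: "\<bar>v\<bar> \<le> 1/2" for v
  proof (cases "v = 0")
    case True thus ?thesis by (simp add: Nf_def)
  next
    case False
    have d0: "diff 0 = (\<lambda>t. (1+t) powr (q-1))" unfolding diff_def by simp
    have vv: "-1/2 \<le> v" "v \<le> 1/2" using v by auto
    from Taylor[of 3 diff "\<lambda>t. (1+t) powr (q-1)" "-1/2" "1/2" 0 v, OF _ d0 D _ _ vv False]
    obtain t where t0: "(if v < 0 then v < t \<and> t < 0 else 0 < t \<and> t < v)"
      and eq: "(1+v) powr (q-1) = (\<Sum>m<3. (diff m 0 / fact m) * v^m) + (diff 3 t / fact 3) * v^3"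
      by auto
    have t: "\<bar>t\<bar> \<le> 1/2" using t0 v by (auto split: if_splits)
    have s: "(\<Sum>m<3. (diff m 0 / fact m) * v^m) = 1 + (q-1)* v + (q-1)*(q-2)/2* v^2"
      by (simp add: diff_def eval_nat_numeral fact_numeral algebra_simps)
    have d3: "diff 3 t = (q-1)*(q-2)*(q-3) * (1+t) powr (q-4)"
      by (simp add: diff_def eval_nat_numeral algebra_simps)
    have pb: "(1+t) powr (q-4) \<le> (1/2) powr (q-4) + (3/2) powr (q-4)"
    proof (cases "q - 4 \<ge> 0")
      case True
      have "(1+t) powr (q-4) \<le> (3/2) powr (q-4)" using t True by (intro powr_mono2) auto
      thus ?thesis by (smt (verit) powr_ge_zero)
    next
      case False
      have "(1+t) powr (q-4) \<le> (1/2) powr (q-4)" using t False by (intro powr_mono2') auto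
      thus ?thesis by (smt (verit) powr_ge_zero)
    qed
    have "abs (Nf q v + (q-2)* v + (q-1)*(q-2)/2* v^2) = \<bar>diff 3 t / 6 * v^3\<bar>"
    proof -
      have e2: "(v+1) powr (q-1) = 1 + (q-1)* v + (q-1)*(q-2)/2* v^2 + diff 3 t / 6 * v^3"
        using eq s by (simp add: add.commute fact_numeral)
      have "Nf q v + (q-2)* v + (q-1)*(q-2)/2* v^2 = -(diff 3 t / 6 * v^3)"
        unfolding Nf_def e2 by (simp add: algebra_simps)
      thus ?thesis by simp
    qed
    also have "\<dots> = \<bar>(q-1)*(q-2)*(q-3)\<bar>/6 * (1+t) powr (q-4) * \<bar>v\<bar>^3"
      by (simp add: d3 abs_mult power_abs)
    also have "\<dots> \<le> K * \<bar>v\<bar>^3" unfolding K_def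
      by (intro mult_right_mono mult_left_mono pb) auto
    finally show ?thesis .
  qed
  thus ?thesis by blast
qed

definition ptv :: "'k::finite \<Rightarrow> 'k \<Rightarrow> real \<Rightarrow> complex^'k" where
  "ptv i0 j k = sqrt k *\<^sub>R axis i0 1 + sqrt (1-k) *\<^sub>R axis j 1"

definition kap :: "'k::finite \<Rightarrow> complex^'k \<Rightarrow> real" where
  "kap i0 y = (cmod (y$i0))^2 / (norm y)^2"

lemma ptv_nth_i0: "i0 \<noteq> j \<Longrightarrow> ptv i0 j k $ i0 = complex_of_real (sqrt k)"
  by (simp add: ptv_def axis_def of_real_def)

lemma inner_ptv: "i0 \<noteq> j \<Longrightarrow> 0 \<le> k \<Longrightarrow> k \<le> 1 \<Longrightarrow> inner (ptv i0 j k) (ptv i0 j k) = 1"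
  by (simp add: ptv_def inner_add_left inner_add_right inner_axis_axis)

lemma norm_ptv: "i0 \<noteq> j \<Longrightarrow> 0 \<le> k \<Longrightarrow> k \<le> 1 \<Longrightarrow> norm (ptv i0 j k) = 1"
  using inner_ptv by (metis norm_eq_sqrt_inner real_sqrt_one)

lemma kap_range: "0 \<le> kap i0 y" "kap i0 y \<le> 1"
proof -
  show "0 \<le> kap i0 y" by (simp add: kap_def)
  have "cmod (y$i0) \<le> norm y" by (rule Finite_Cartesian_Product.norm_nth_le)
  hence "(cmod (y$i0))^2 \<le> (norm y)^2" by (simp add: power_mono)
  thus "kap i0 y \<le> 1" unfolding kap_def by (cases "y = 0") (auto simp: divide_le_eq_1)
qed

lemma kap_ptv: "i0 \<noteq> j \<Longrightarrow> 0 \<le> k \<Longrightarrow> k \<le> 1 \<Longrightarrow> kap i0 (ptv i0 j k) = k"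
  by (simp add: kap_def norm_ptv ptv_nth_i0)

lemma XI_inv:
  assumes "u \<in> XI i0" "i0 \<noteq> j" "y \<noteq> 0"
  shows "sph_ext u y = u (ptv i0 j (kap i0 y))"
proof -
  obtain U where U: "\<forall>x\<in>sphere 0 1. u x = U (fdist i0 x)" using assms(1) unfolding XI_def by auto
  have ny: "norm y > 0" using assms by auto
  have s1: "y /\<^sub>R norm y \<in> sphere 0 1" using ny by simp
  have s2: "ptv i0 j (kap i0 y) \<in> sphere 0 1" using norm_ptv[OF assms(2) kap_range] by simp
  have "cmod ((y /\<^sub>R norm y) $ i0) = cmod (y $ i0) / norm y"
  proof -
    have "(y /\<^sub>R norm y) $ i0 = (y $ i0) /\<^sub>R norm y" by simp
    thus ?thesis using ny by (simp add: divide_inverse mult.commute)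
  qed
  moreover have "cmod (ptv i0 j (kap i0 y) $ i0) = cmod (y $ i0) / norm y"
    using ny by (simp add: ptv_nth_i0[OF assms(2)] kap_def real_sqrt_divide norm_divide)
  ultimately have "fdist i0 (y /\<^sub>R norm y) = fdist i0 (ptv i0 j (kap i0 y))"
    by (simp add: fdist_def)
  thus ?thesis using U s1 s2 by (simp add: sph_ext_def)
qed

lemma ratf_deriv:
  fixes A B C \<Gamma> :: real
  defines "f \<equiv> \<lambda>t. (A + 2*B*t + C*t^2)/(1 + 2*\<Gamma>*t + t^2)"
    and "f1 \<equiv> \<lambda>t. ((2*B + 2*C*t)*(1 + 2*\<Gamma>*t + t^2) - (A + 2*B*t + C*t^2)*(2*\<Gamma> + 2*t)) / (1 + 2*\<Gamma>*t + t^2)^2"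
  shows "1 + 2*\<Gamma>*t + t^2 \<noteq> 0 \<Longrightarrow> (f has_real_derivative f1 t) (at t)"
    and "(f1 has_real_derivative (2*C - 8*B*\<Gamma> - 2*A + 8*A*\<Gamma>^2)) (at 0)"
    and "f1 0 = 2*B - 2*A*\<Gamma>"
proof -
  show "1 + 2*\<Gamma>*t + t^2 \<noteq> 0 \<Longrightarrow> (f has_real_derivative f1 t) (at t)"
    unfolding f_def f1_def
    by (auto intro!: derivative_eq_intros simp: power2_eq_square field_simps)
  show "(f1 has_real_derivative (2*C - 8*B*\<Gamma> - 2*A + 8*A*\<Gamma>^2)) (at 0)"
    unfolding f1_def
    by (rule derivative_eq_intros refl | simp)+ (simp add: power2_eq_square algebra_simps)
  show "f1 0 = 2*B - 2*A*\<Gamma>" by (simp add: f1_def)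
qed

lemma dir2:
  fixes G :: "'a::real_normed_vector \<Rightarrow> real"
  assumes r: "r > 0"
    and eqG: "\<forall>t. \<bar>t\<bar> < r \<longrightarrow> G (y0 + t *\<^sub>R b) = V (ky t)"
    and dk: "\<forall>t. \<bar>t\<bar> < r \<longrightarrow> (ky has_real_derivative k1 t) (at t)"
    and dk1: "(k1 has_real_derivative k2) (at 0)"
    and dV: "\<forall>t. \<bar>t\<bar> < r \<longrightarrow> (V has_real_derivative Vd (ky t)) (at (ky t))"
    and dVd: "(Vd has_real_derivative Vdd) (at (ky 0))"
  shows "dderiv b G y0 = Vd (ky 0) * k1 0"
    and "dderiv b (dderiv b G) y0 = Vdd * (k1 0)^2 + Vd (ky 0) * k2"
proof -
  have A: "dderiv b G (y0 + t *\<^sub>R b) = Vd (ky t) * k1 t" if t: "\<bar>t\<bar> < r" for t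
  proof -
    have d1: "((\<lambda>s. ky (s + t)) has_real_derivative k1 t) (at 0)"
      using dk t DERIV_shift[of ky "k1 t" 0 t] by simp
    have d2: "((\<lambda>s. V (ky (s + t))) has_real_derivative Vd (ky t) * k1 t) (at 0)"
      using DERIV_chain2[OF _ d1, of V "Vd (ky t)"] dV t by simp
    have op: "open {s. \<bar>s + t\<bar> < r}"
      by (intro open_Collect_less continuous_intros)
    have d3: "((\<lambda>s. G (y0 + t *\<^sub>R b + s *\<^sub>R b)) has_real_derivative Vd (ky t) * k1 t) (at 0)"
    proof (rule has_field_derivative_transform_within_open[OF d2 op])
      show "0 \<in> {s. \<bar>s + t\<bar> < r}" using t by simp
      fix s assume "s \<in> {s. \<bar>s + t\<bar> < r}"
      hence "\<bar>s + t\<bar> < r" by simp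
      hence "G (y0 + (s + t) *\<^sub>R b) = V (ky (s + t))" using eqG by blast
      thus "V (ky (s + t)) = G (y0 + t *\<^sub>R b + s *\<^sub>R b)"
      proof -
        have "y0 + t *\<^sub>R b + s *\<^sub>R b = y0 + (s + t) *\<^sub>R b" by (simp add: scaleR_add_left algebra_simps)
        thus ?thesis using \<open>G (y0 + (s + t) *\<^sub>R b) = V (ky (s + t))\<close> by metis
      qed
    qed
    show ?thesis unfolding dderiv_def using DERIV_imp_deriv[OF d3] .
  qed
  show "dderiv b G y0 = Vd (ky 0) * k1 0" using A[of 0] r by simp
  have e1: "((\<lambda>t. Vd (ky t) * k1 t) has_real_derivative Vdd * (k1 0)^2 + Vd (ky 0) * k2) (at 0)"
  proof -
    have "((\<lambda>t. Vd (ky t)) has_real_derivative Vdd * k1 0) (at 0)"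
    proof -
      have "(ky has_real_derivative k1 0) (at 0)" using dk r by simp
      from DERIV_chain2[where f=Vd and g=ky and x=0, OF dVd this] show ?thesis .
    qed
    from DERIV_mult[OF this dk1] show ?thesis by (simp add: power2_eq_square algebra_simps)
  qed
  have op: "open {t::real. \<bar>t\<bar> < r}" by (intro open_Collect_less continuous_intros)
  have "((\<lambda>t. dderiv b G (y0 + t *\<^sub>R b)) has_real_derivative Vdd * (k1 0)^2 + Vd (ky 0) * k2) (at 0)"
    by (rule has_field_derivative_transform_within_open[OF e1 op]) (use r A in auto)
  thus "dderiv b (dderiv b G) y0 = Vdd * (k1 0)^2 + Vd (ky 0) * k2"
    unfolding dderiv_def[of b "dderiv b G"] by (rule DERIV_imp_deriv)
qed

lemma norm2_axes: "i0 \<noteq> j \<Longrightarrow> (norm (x *\<^sub>R axis i0 (1::complex) + z *\<^sub>R axis j 1))^2 = x^2 + z^2"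
  unfolding power2_norm_eq_inner by (simp add: inner_add_left inner_add_right inner_axis_axis power2_eq_square)

lemma axis_in_Basis: "axis i (1::complex) \<in> Basis" "axis i \<i> \<in> Basis"
  by (auto simp: Basis_vec_def Basis_complex_def)

lemma open_ann_open: "open (ann_open :: 'a::real_normed_vector set)"
  unfolding ann_open_def by (intro open_Collect_conj open_Collect_less continuous_intros)

lemma V_diff:
  fixes G :: "complex^'k::finite \<Rightarrow> real" and V :: "real \<Rightarrow> real"
  assumes ij: "i0 \<noteq> j" and C2: "C2_on G ann_open" and GV: "\<forall>y. y \<noteq> 0 \<longrightarrow> G y = V (kap i0 y)"
    and k0: "0 < k0" "k0 < 1"
  shows "(V has_real_derivative deriv V k0) (at k0)"
    and "(deriv V has_real_derivative deriv (deriv V) k0) (at k0)"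
    and "deriv V k0 * (2 * sqrt k0 * (1-k0)) = dderiv (axis i0 1) G (ptv i0 j k0)"
proof -
  define e :: "complex^'k" where "e = axis i0 1"
  define f :: "complex^'k" where "f = axis j 1"
  define a where "a = sqrt k0"
  define c where "c = sqrt (1-k0)"
  define y0 where "y0 = ptv i0 j k0"
  define \<sigma> where "\<sigma> = (\<lambda>k. c * sqrt (k/(1-k)) - a)"
  define \<sigma>d where "\<sigma>d = (\<lambda>k. c * (inverse (sqrt (k/(1-k))) / 2) * (1/(1-k)^2))"
  define k where "k = (\<lambda>t. dderiv e G (y0 + t *\<^sub>R e))"
  define h where "h = (\<lambda>t. G (y0 + t *\<^sub>R e))"
  have a0: "a > 0" and c0: "c > 0" using k0 by (auto simp: a_def c_def)
  have a2: "a^2 = k0" and c2: "c^2 = 1 - k0" using k0 by (auto simp: a_def c_def)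
  have eB: "e \<in> Basis" unfolding e_def by (rule axis_in_Basis)
  have yt: "y0 + t *\<^sub>R e = (a+t) *\<^sub>R e + c *\<^sub>R f" for t
    by (simp add: y0_def ptv_def e_def f_def a_def c_def scaleR_add_left algebra_simps)
  have nyt: "(norm (y0 + t *\<^sub>R e))^2 = (a+t)^2 + c^2" for t
    by (subst yt) (simp add: e_def f_def norm2_axes[OF ij])
  have kapt: "kap i0 (y0 + t *\<^sub>R e) = (a+t)^2/((a+t)^2 + c^2)" for t
  proof -
    have "(y0 + t *\<^sub>R e) $ i0 = complex_of_real (a+t)"
      unfolding yt using ij by (simp add: e_def f_def axis_def of_real_def)
    thus ?thesis unfolding kap_def nyt by (simp only: norm_of_real power2_abs)
  qed
  have sig: "a + \<sigma> x > 0 \<and> kap i0 (y0 + \<sigma> x *\<^sub>R e) = x \<and> y0 + \<sigma> x *\<^sub>R e \<noteq> 0 \<and>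
      norm (y0 + \<sigma> x *\<^sub>R e) = c / sqrt (1-x)" if x: "0 < x" "x < 1" for x
  proof -
    have q: "x/(1-x) > 0" using x by simp
    have s2: "(a + \<sigma> x)^2 = c^2 * (x/(1-x))" unfolding \<sigma>_def using q
      by (simp add: power_mult_distrib)
    have pos: "a + \<sigma> x > 0" unfolding \<sigma>_def using q c0 by simp
    have kk: "(a + \<sigma> x)^2/((a + \<sigma> x)^2 + c^2) = x" unfolding s2 using x c0
      by (simp add: field_simps)
    have nn: "(norm (y0 + \<sigma> x *\<^sub>R e))^2 = c^2 / (1-x)" unfolding nyt s2 using x
      by (simp add: field_simps)
    hence "norm (y0 + \<sigma> x *\<^sub>R e) = sqrt (c^2/(1-x))" by (metis norm_ge_zero real_sqrt_unique)
    hence nn2: "norm (y0 + \<sigma> x *\<^sub>R e) = c / sqrt (1-x)" using c0 by (simp add: real_sqrt_divide)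
    show ?thesis using pos kapt[of "\<sigma> x"] kk nn2 c0 x by auto
  qed
  have Vsig: "V x = h (\<sigma> x)" if "0 < x" "x < 1" for x
    using sig[OF that] GV unfolding h_def by metis
  have dh: "(h has_real_derivative k t) (at t)" if "y0 + t *\<^sub>R e \<in> ann_open" for t
  proof -
    have "(\<lambda>s. G ((y0 + t *\<^sub>R e) + s *\<^sub>R e)) field_differentiable (at 0)"
      using C2 eB that unfolding C2_on_def by blast
    hence "((\<lambda>s. G ((y0 + t *\<^sub>R e) + s *\<^sub>R e)) has_real_derivative k t) (at 0)"
      unfolding k_def dderiv_def by (simp add: DERIV_deriv_iff_field_differentiable[symmetric])
    moreover have "(\<lambda>s. G ((y0 + t *\<^sub>R e) + s *\<^sub>R e)) = (\<lambda>s. h (s + t))"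
      by (rule ext) (simp add: h_def scaleR_add_left algebra_simps)
    ultimately show ?thesis using DERIV_shift[of h "k t" 0 t] by simp
  qed
  have y0ann: "y0 \<in> ann_open" unfolding y0_def ann_open_def using norm_ptv[OF ij] k0 by simp
  have dk: "(k has_real_derivative deriv k 0) (at 0)"
  proof -
    have "(\<lambda>s. dderiv e G (y0 + s *\<^sub>R e)) field_differentiable (at 0)"
      using C2 eB y0ann unfolding C2_on_def by blast
    thus ?thesis unfolding k_def by (simp add: DERIV_deriv_iff_field_differentiable)
  qed
  have dsig: "(\<sigma> has_real_derivative \<sigma>d x) (at x)" if "0 < x" "x < 1" for x
  proof -
    have "((\<lambda>x. x/(1-x)) has_real_derivative 1/(1-x)^2) (at x)"
      using that by (auto intro!: derivative_eq_intros simp: field_simps power2_eq_square)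
    from DERIV_chain2[OF DERIV_real_sqrt this] have
      "((\<lambda>x. sqrt (x/(1-x))) has_real_derivative inverse (sqrt (x/(1-x))) / 2 * (1/(1-x)^2)) (at x)"
      using that by simp
    from DERIV_cmult[OF this, of c] have
      "((\<lambda>x. c * sqrt (x/(1-x))) has_real_derivative c * (inverse (sqrt (x/(1-x))) / 2 * (1/(1-x)^2))) (at x)" .
    from DERIV_diff[OF this DERIV_const] show ?thesis
      unfolding \<sigma>_def \<sigma>d_def by (simp add: mult.assoc)
  qed
  define S0 where "S0 = {0<..<1} \<inter> (\<lambda>x. y0 + \<sigma> x *\<^sub>R e) -` ann_open"
  have contsig: "continuous_on {0<..<1} \<sigma>"
    using dsig by (meson DERIV_continuous continuous_at_imp_continuous_on greaterThanLessThan_iff)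
  have oS0: "open S0" unfolding S0_def
    by (rule continuous_open_preimage[OF _ open_greaterThanLessThan open_ann_open])
       (intro continuous_intros contsig)
  have sig0: "\<sigma> k0 = 0"
  proof -
    have "sqrt (k0/(1-k0)) = a / c" by (simp add: a_def c_def real_sqrt_divide)
    thus ?thesis unfolding \<sigma>_def using c0 by simp
  qed
  have k0S0: "k0 \<in> S0" unfolding S0_def using k0 sig0 y0ann by simp
  have dV: "(V has_real_derivative k (\<sigma> x) * \<sigma>d x) (at x)" if "x \<in> S0" for x
  proof -
    from that have x: "0 < x" "x < 1" "y0 + \<sigma> x *\<^sub>R e \<in> ann_open" unfolding S0_def by auto
    have "((\<lambda>x. h (\<sigma> x)) has_real_derivative k (\<sigma> x) * \<sigma>d x) (at x)"
      by (rule DERIV_chain2[OF dh[OF x(3)] dsig[OF x(1,2)]])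
    thus ?thesis
      by (rule has_field_derivative_transform_within_open[OF _ oS0 that])
         (simp add: Vsig S0_def)
  qed
  have dVeq: "deriv V x = k (\<sigma> x) * \<sigma>d x" if "x \<in> S0" for x
    using dV[OF that] by (rule DERIV_imp_deriv)
  show "(V has_real_derivative deriv V k0) (at k0)" using dV[OF k0S0] dVeq[OF k0S0] by simp
  have "\<exists>D. (\<sigma>d has_real_derivative D) (at k0)"
    unfolding \<sigma>d_def apply (rule exI) using k0 by (auto intro!: derivative_eq_intros simp: divide_less_0_iff)
  then obtain D where dD: "(\<sigma>d has_real_derivative D) (at k0)" by blast
  have "((\<lambda>x. k (\<sigma> x)) has_real_derivative deriv k 0 * \<sigma>d k0) (at k0)"
    using DERIV_chain2[where f=k and g=\<sigma> and x=k0, OF _ dsig[OF k0]] dk sig0 by simp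
  from DERIV_mult[OF this dD] have
    "((\<lambda>x. k (\<sigma> x) * \<sigma>d x) has_real_derivative deriv k 0 * \<sigma>d k0 * \<sigma>d k0 + D * k (\<sigma> k0)) (at k0)" .
  hence "(deriv V has_real_derivative deriv k 0 * \<sigma>d k0 * \<sigma>d k0 + D * k (\<sigma> k0)) (at k0)"
    by (rule has_field_derivative_transform_within_open[OF _ oS0 k0S0]) (simp add: dVeq)
  thus "(deriv V has_real_derivative deriv (deriv V) k0) (at k0)"
    using DERIV_imp_deriv by metis
  have "\<sigma>d k0 * (2 * sqrt k0 * (1-k0)) = 1"
  proof -
    have "sqrt (k0/(1-k0)) = a / c" by (simp add: a_def c_def real_sqrt_divide)
    hence "\<sigma>d k0 = c * (c/a/2) * (1/(c^2)^2)" unfolding \<sigma>d_def using c2 by simp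
    moreover have "c * (c/a/2) * (1/(c^2)^2) * (2 * a * c^2) = 1" using a0 c0 by (simp add: field_simps power2_eq_square)
    ultimately show ?thesis using c2 by (simp add: a_def[symmetric])
  qed
  moreover have "k (\<sigma> k0) = dderiv (axis i0 1) G (ptv i0 j k0)"
    unfolding k_def sig0 e_def y0_def by simp
  ultimately show "deriv V k0 * (2 * sqrt k0 * (1-k0)) = dderiv (axis i0 1) G (ptv i0 j k0)"
    using dVeq[OF k0S0] by (metis mult.assoc mult.commute mult_1_right)
qed

lemma kap_line:
  fixes b :: "complex^'k::finite"
  assumes ij: "i0 \<noteq> j" and k0: "0 \<le> k0" "k0 \<le> 1" and bB: "b \<in> Basis"
  shows "(cmod ((ptv i0 j k0 + t *\<^sub>R b) $ i0))^2 = k0 + 2*(sqrt k0 * Re (b$i0))*t + (cmod (b$i0))^2*t^2"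
    and "(norm (ptv i0 j k0 + t *\<^sub>R b))^2 = 1 + 2*(inner (ptv i0 j k0) b)*t + t^2"
proof -
  have z: "(ptv i0 j k0 + t *\<^sub>R b) $ i0 = complex_of_real (sqrt k0) + t *\<^sub>R (b$i0)"
    using ptv_nth_i0[OF ij] by simp
  show "(cmod ((ptv i0 j k0 + t *\<^sub>R b) $ i0))^2 = k0 + 2*(sqrt k0 * Re (b$i0))*t + (cmod (b$i0))^2*t^2"
    unfolding z cmod_power2 using k0 by (simp add: power2_eq_square algebra_simps)
  show "(norm (ptv i0 j k0 + t *\<^sub>R b))^2 = 1 + 2*(inner (ptv i0 j k0) b)*t + t^2"
    unfolding power2_norm_eq_inner using inner_ptv[OF ij k0] bB
    by (simp add: inner_add_left inner_add_right inner_commute power2_eq_square algebra_simps)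
qed

lemma lap_dir_b:
  fixes G :: "complex^'k::finite \<Rightarrow> real" and V :: "real \<Rightarrow> real"
  assumes ij: "i0 \<noteq> j" and C2: "C2_on G ann_open" and GV: "\<forall>y. y \<noteq> 0 \<longrightarrow> G y = V (kap i0 y)"
    and k0: "0 < k0" "k0 < 1" and bB: "b \<in> Basis"
  shows "dderiv b (dderiv b G) (ptv i0 j k0) =
     deriv (deriv V) k0 * (2*(sqrt k0 * Re (b$i0)) - 2*k0*inner (ptv i0 j k0) b)^2 +
     deriv V k0 * (2*(cmod (b$i0))^2 - 8*(sqrt k0 * Re (b$i0))*inner (ptv i0 j k0) b - 2*k0 + 8*k0*(inner (ptv i0 j k0) b)^2)"
proof -
  define y0 where "y0 = ptv i0 j k0"
  define B where "B = sqrt k0 * Re (b$i0)"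
  define C where "C = (cmod (b$i0))^2"
  define \<Gamma> where "\<Gamma> = inner y0 b"
  define ky where "ky = (\<lambda>t. (k0 + 2*B*t + C*t^2)/(1 + 2*\<Gamma>*t + t^2))"
  define k1 where "k1 = (\<lambda>t. ((2*B + 2*C*t)*(1 + 2*\<Gamma>*t + t^2) - (k0 + 2*B*t + C*t^2)*(2*\<Gamma> + 2*t)) / (1 + 2*\<Gamma>*t + t^2)^2)"
  have ny0: "norm y0 = 1" unfolding y0_def using norm_ptv[OF ij] k0 by simp
  have Gb: "\<bar>\<Gamma>\<bar> \<le> 1" unfolding \<Gamma>_def using Cauchy_Schwarz_ineq2[of y0 b] ny0 bB by simp
  have Dpos: "1 + 2*\<Gamma>*t + t^2 > 0" if "\<bar>t\<bar> < 1" for t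
  proof -
    have "\<bar>2*\<Gamma>*t\<bar> \<le> 2*\<bar>t\<bar>" using Gb by (simp add: abs_mult mult_left_le_one_le)
    moreover have "(1 - \<bar>t\<bar>)^2 > 0" using that by simp
    moreover have "(1 - \<bar>t\<bar>)^2 = 1 - 2*\<bar>t\<bar> + t^2" by (simp add: power2_eq_square algebra_simps)
    moreover have "-(2*\<Gamma>*t) \<le> \<bar>2*\<Gamma>*t\<bar>" by simp
    ultimately show ?thesis by linarith
  qed
  have kapl: "kap i0 (y0 + t *\<^sub>R b) = ky t" for t
    unfolding kap_def ky_def y0_def B_def C_def \<Gamma>_def using kap_line[OF ij _ _ bB, of k0 t] k0 by simp
  have nz: "y0 + t *\<^sub>R b \<noteq> 0" if "\<bar>t\<bar> < 1" for t
  proof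
    assume "y0 + t *\<^sub>R b = 0"
    hence "(norm (y0 + t *\<^sub>R b))^2 = 0" by simp
    thus False using kap_line(2)[OF ij _ _ bB, of k0 t] k0 Dpos[OF that] by (simp add: y0_def \<Gamma>_def)
  qed
  have dky: "(ky has_real_derivative k1 t) (at t)" if "\<bar>t\<bar> < 1" for t
    unfolding ky_def k1_def using ratf_deriv(1)[of \<Gamma> t k0 B C] Dpos[OF that] by simp
  have dk1: "(k1 has_real_derivative (2*C - 8*B*\<Gamma> - 2*k0 + 8*k0*\<Gamma>^2)) (at 0)"
    unfolding k1_def using ratf_deriv(2)[where A=k0 and B=B and C=C and \<Gamma>=\<Gamma>] by simp
  have k10: "k1 0 = 2*B - 2*k0*\<Gamma>" unfolding k1_def by simp
  have ky0: "ky 0 = k0" unfolding ky_def by simp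
  have "isCont ky 0" using dky[of 0] by (simp add: DERIV_isCont)
  hence "\<exists>d>0. \<forall>t. t \<noteq> 0 \<and> norm (t - 0) < d \<longrightarrow> norm (ky t - ky 0) < min k0 (1-k0)"
  proof -
    have "min k0 (1-k0) > 0" using k0 by simp
    thus ?thesis using \<open>isCont ky 0\<close> unfolding isCont_def LIM_eq by blast
  qed
  then obtain d where d0: "d > 0" and dd: "\<forall>t. t \<noteq> 0 \<and> norm (t - 0) < d \<longrightarrow> norm (ky t - ky 0) < min k0 (1-k0)"
    by blast
  have d: "d > 0" "\<forall>t. dist t 0 < d \<longrightarrow> ky t \<in> {0<..<1}"
  proof (rule d0, intro allI impI)
    fix t :: real assume "dist t 0 < d"
    thus "ky t \<in> {0<..<1}" using dd[rule_format, of t] ky0 k0 by (cases "t = 0") auto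
  qed
  define r where "r = min d 1"
  have r: "r > 0" using d by (simp add: r_def)
  have eqG: "\<forall>t. \<bar>t\<bar> < r \<longrightarrow> G (y0 + t *\<^sub>R b) = V (ky t)"
    using GV nz kapl r_def by simp
  have dk: "\<forall>t. \<bar>t\<bar> < r \<longrightarrow> (ky has_real_derivative k1 t) (at t)" using dky r_def by simp
  have dV: "\<forall>t. \<bar>t\<bar> < r \<longrightarrow> (V has_real_derivative deriv V (ky t)) (at (ky t))"
  proof (intro allI impI)
    fix t assume "\<bar>t\<bar> < r"
    hence "ky t \<in> {0<..<1}" using d r_def by simp
    thus "(V has_real_derivative deriv V (ky t)) (at (ky t))"
      using V_diff(1)[OF ij C2 GV] by simp
  qed
  have dVd: "(deriv V has_real_derivative deriv (deriv V) k0) (at (ky 0))"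
    using V_diff(2)[OF ij C2 GV k0] ky0 by simp
  from dir2(2)[OF r eqG dk dk1 dV dVd] show ?thesis
    unfolding k10 ky0 y0_def B_def C_def \<Gamma>_def by simp
qed

lemma lap_formula:
  fixes G :: "complex^'k::finite \<Rightarrow> real" and V :: "real \<Rightarrow> real"
  assumes ij: "i0 \<noteq> j" and C2: "C2_on G ann_open" and GV: "\<forall>y. y \<noteq> 0 \<longrightarrow> G y = V (kap i0 y)"
    and k0: "0 < k0" "k0 < 1" and card: "CARD('k) = n + 1"
  shows "(\<Sum>b\<in>Basis. dderiv b (dderiv b G) (ptv i0 j k0)) =
     4*k0*(1-k0) * deriv (deriv V) k0 + (4 - 4*(real n+1)*k0) * deriv V k0"
proof -
  define y0 where "y0 = ptv i0 j k0"
  define e :: "complex^'k" where "e = axis i0 1"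
  define e' :: "complex^'k" where "e' = axis i0 \<i>"
  define a where "a = sqrt k0"
  define Vdd where "Vdd = deriv (deriv V) k0"
  define Vd where "Vd = deriv V k0"
  define R where "R = (\<lambda>b::complex^'k. inner b e)"
  define I where "I = (\<lambda>b::complex^'k. inner b e')"
  define \<Gamma> where "\<Gamma> = (\<lambda>b::complex^'k. inner y0 b)"
  have a2: "a^2 = k0" using k0 by (simp add: a_def)
  have Rb: "Re (b$i0) = R b" and Qb: "(cmod (b$i0))^2 = R b ^2 + I b ^2" for b :: "complex^'k"
    by (simp_all add: R_def I_def e_def e'_def inner_axis cmod_power2)
  have sR: "(\<Sum>b\<in>Basis. R b ^2) = 1"
    using euclidean_inner[of e e] by (simp add: R_def e_def power2_eq_square inner_commute inner_axis_axis)
  have sI: "(\<Sum>b\<in>Basis. I b ^2) = 1"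
    using euclidean_inner[of e' e'] by (simp add: I_def e'_def power2_eq_square inner_commute inner_axis_axis)
  have sRG: "(\<Sum>b\<in>Basis. R b * \<Gamma> b) = a"
  proof -
    have "inner e y0 = a" using ij
      by (simp add: e_def y0_def ptv_def a_def inner_add_right inner_axis_axis)
    thus ?thesis using euclidean_inner[of e y0] by (simp add: R_def \<Gamma>_def inner_commute)
  qed
  have sG: "(\<Sum>b\<in>Basis. \<Gamma> b ^2) = 1"
    using euclidean_inner[of y0 y0] inner_ptv[OF ij] k0 by (simp add: \<Gamma>_def y0_def power2_eq_square)
  have cB: "card (Basis :: (complex^'k) set) = 2 * (n+1)"
    using DIM_cart[where 'a=complex and 'b='k] card by simp
  have "(\<Sum>b\<in>Basis. dderiv b (dderiv b G) y0) =
     (\<Sum>b\<in>Basis. (4*a^2*Vdd + 2*Vd) * R b^2 + 2*Vd * I b^2 + (-8*a*k0*Vdd - 8*a*Vd) * (R b * \<Gamma> b)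
        + (4*k0^2*Vdd + 8*k0*Vd) * \<Gamma> b^2 - 2*k0*Vd)"
  proof (rule sum.cong[OF refl])
    fix b :: "complex^'k" assume bB: "b \<in> Basis"
    show "dderiv b (dderiv b G) y0 = (4*a^2*Vdd + 2*Vd) * R b^2 + 2*Vd * I b^2 + (-8*a*k0*Vdd - 8*a*Vd) * (R b * \<Gamma> b)
        + (4*k0^2*Vdd + 8*k0*Vd) * \<Gamma> b^2 - 2*k0*Vd"
      unfolding y0_def lap_dir_b[OF ij C2 GV k0 bB] Rb Qb
      by (simp add: Vdd_def Vd_def a_def[symmetric] \<Gamma>_def[symmetric] y0_def[symmetric] power2_eq_square algebra_simps)
  qed
  also have "\<dots> = (4*a^2*Vdd + 2*Vd) * (\<Sum>b\<in>Basis. R b^2) + 2*Vd * (\<Sum>b\<in>Basis. I b^2)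
      + (-8*a*k0*Vdd - 8*a*Vd) * (\<Sum>b\<in>Basis. R b * \<Gamma> b) + (4*k0^2*Vdd + 8*k0*Vd) * (\<Sum>b\<in>Basis. \<Gamma> b^2)
      - 2*k0*Vd * card (Basis :: (complex^'k) set)"
    by (simp add: sum.distrib sum_subtractf sum_distrib_left)
  also have "\<dots> = 4*k0*(1-k0) * Vdd + (4 - 4*(real n+1)*k0) * Vd"
    unfolding sR sI sRG sG cB a2[symmetric] by (simp add: power2_eq_square algebra_simps)
  finally show ?thesis by (simp add: y0_def Vdd_def Vd_def)
qed

lemma ann_sub: "ann \<subseteq> ann_open"
  unfolding ann_def ann_open_def by auto

lemma compact_ann: "compact (ann :: 'a::euclidean_space set)"
proof -
  have "ann = cball (0::'a) 2 \<inter> - ball 0 (1/2)" unfolding ann_def by auto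
  moreover have "compact (cball (0::'a) 2 \<inter> - ball 0 (1/2))"
    by (intro compact_Int_closed compact_cball closed_Compl open_ball)
  ultimately show ?thesis by simp
qed

lemma bound_on_ann:
  fixes f :: "'a::euclidean_space \<Rightarrow> real"
  assumes "continuous_on ann_open f"
  shows "\<exists>M. \<forall>x\<in>ann. \<bar>f x\<bar> \<le> M"
proof -
  have "continuous_on ann f" using assms ann_sub continuous_on_subset by blast
  hence "compact (f ` ann)" using compact_ann compact_continuous_image by blast
  hence "bounded (f ` ann)" by (rule compact_imp_bounded)
  then obtain M where "\<forall>y\<in>f ` ann. norm y \<le> M" unfolding bounded_iff by blast
  thus ?thesis by auto
qed

lemma ptv_ann: "i0 \<noteq> j \<Longrightarrow> 0 \<le> k \<Longrightarrow> k \<le> 1 \<Longrightarrow> ptv i0 j k \<in> ann"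
  using norm_ptv[of i0 j k] unfolding ann_def by simp

lemma sph_ext_unit: "norm x = 1 \<Longrightarrow> sph_ext u x = u x"
  by (simp add: sph_ext_def)

lemma wronsk:
  fixes u :: "complex^'k::finite \<Rightarrow> real"
  assumes ij: "i0 \<noteq> j" and card: "CARD('k) = n + 1" and n2: "n \<ge> 2"
    and uC: "u \<in> C2a \<alpha>" and uX: "u \<in> XI i0"
    and eq: "\<forall>x\<in>sphere 0 1. S_op q u L x = 0"
  shows "((\<lambda>k. (1-k)^(n-1) * (((real n+1)* k - 1)/real n) * (L * Nf q (u (ptv i0 j k)) + 4*(real n+1) * u (ptv i0 j k)))
           has_integral 0) {0..1}"
proof -
  define G where "G = sph_ext u"
  define V where "V = (\<lambda>k. u (ptv i0 j k))"
  define Vd where "Vd = deriv V"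
  define Vdd where "Vdd = deriv Vd"
  define \<phi> where "\<phi> = (\<lambda>k. ((real n+1)* k - 1)/real n)"
  define \<phi>' where "\<phi>' = (real n+1)/real n"
  define F0 where "F0 = (\<lambda>k. 4* k*(1-k)^n * (Vd k * \<phi> k - V k * \<phi>'))"
  define F where "F = (\<lambda>k. if k \<in> {0<..<1} then F0 k else 0)"
  define Fd where "Fd = (\<lambda>k. (1-k)^(n-1) * \<phi> k * (L * Nf q (V k) + 4*(real n+1) * V k))"
  obtain m where nm: "n = Suc m" and m1: "m \<ge> 1" using n2 by (cases n) auto
  have C2: "C2_on G ann_open" using uC unfolding C2a_def G_def by simp
  have GV: "\<forall>y. y \<noteq> 0 \<longrightarrow> G y = V (kap i0 y)"
    using XI_inv[OF uX ij] unfolding G_def V_def by blast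
  have dV: "(V has_real_derivative Vd k) (at k)" and dVd: "(Vd has_real_derivative Vdd k) (at k)"
    and lap: "(\<Sum>b\<in>Basis. dderiv b (dderiv b G) (ptv i0 j k)) = 4* k*(1-k) * Vdd k + (4 - 4*(real n+1)* k) * Vd k"
    if "0 < k" "k < 1" for k
    using V_diff(1,2)[OF ij C2 GV that] lap_formula[OF ij C2 GV that card]
    unfolding Vd_def Vdd_def by auto
  have eqk: "4* k*(1-k) * Vdd k + (4 - 4*(real n+1)* k) * Vd k = L * Nf q (V k)" if "0 < k" "k < 1" for k
  proof -
    have "norm (ptv i0 j k) = 1" using norm_ptv[OF ij] that by simp
    hence "S_op q u L (ptv i0 j k) = 0" using eq by simp
    thus ?thesis using lap[OF that] unfolding S_op_def sph_lap_def G_def Nf_def V_def by simp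
  qed
  have dF0: "(F0 has_real_derivative Fd k) (at k)" if k: "0 < k" "k < 1" for k
  proof -
    have dP: "((\<lambda>k. 4* k*(1-k)^n) has_real_derivative (4*(1-k)^n - 4* k*(real n*(1-k)^(n-1)))) (at k)"
      by (auto intro!: derivative_eq_intros simp: algebra_simps)
    have dphi: "(\<phi> has_real_derivative \<phi>') (at k)" unfolding \<phi>_def \<phi>'_def
      using DERIV_cdivide[OF DERIV_diff[OF DERIV_cmult[OF DERIV_ident, of "real n+1"] DERIV_const[of 1]], of "real n"]
      by simp
    have dW: "((\<lambda>k. Vd k * \<phi> k - V k * \<phi>') has_real_derivative (Vdd k * \<phi> k + Vd k * \<phi>' - Vd k * \<phi>')) (at k)"
      using DERIV_diff[OF DERIV_mult[OF dVd[OF k] dphi] DERIV_mult[OF dV[OF k] DERIV_const[of \<phi>']]]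
      by simp
    have "(F0 has_real_derivative
        (4*(1-k)^n - 4* k*(real n*(1-k)^(n-1))) * (Vd k * \<phi> k - V k * \<phi>') +
        (Vdd k * \<phi> k + Vd k * \<phi>' - Vd k * \<phi>') * (4* k*(1-k)^n)) (at k)"
      unfolding F0_def by (rule DERIV_mult[OF dP dW])
    moreover have "(4*(1-k)^n - 4* k*(real n*(1-k)^(n-1))) * (Vd k * \<phi> k - V k * \<phi>') +
        (Vdd k * \<phi> k + Vd k * \<phi>' - Vd k * \<phi>') * (4* k*(1-k)^n) = Fd k"
    proof -
      have pn: "(1-k)^n = (1-k) * (1-k)^(n-1)" using n2 by (cases n) auto
      have rn: "real n \<noteq> 0" using n2 by simp
      have alg: "(4*((1-k)* p) - 4* k*(real n* p)) * (vd * (((real n+1)* k - 1)/real n) - v * ((real n+1)/real n)) +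
        (vdd * (((real n+1)* k - 1)/real n) + vd * ((real n+1)/real n) - vd * ((real n+1)/real n)) * (4* k*((1-k)* p))
        = p * (((real n+1)* k - 1)/real n) * (4* k*(1-k) * vdd + (4 - 4*(real n+1)* k) * vd + 4*(real n+1) * v)"
        for p v vd vdd :: real
        using rn by (simp add: field_simps)
      have "Fd k = (1-k)^(n-1) * \<phi> k * (4* k*(1-k) * Vdd k + (4 - 4*(real n+1)* k) * Vd k + 4*(real n+1) * V k)"
        unfolding Fd_def eqk[OF k] by simp
      moreover have "(4*(1-k)^n - 4* k*(real n*(1-k)^(n-1))) * (Vd k * \<phi> k - V k * \<phi>') +
        (Vdd k * \<phi> k + Vd k * \<phi>' - Vd k * \<phi>') * (4* k*(1-k)^n) =
        (1-k)^(n-1) * \<phi> k * (4* k*(1-k) * Vdd k + (4 - 4*(real n+1)* k) * Vd k + 4*(real n+1) * V k)"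
        unfolding pn \<phi>_def \<phi>'_def by (rule alg)
      ultimately show ?thesis by simp
    qed
    ultimately show ?thesis by simp
  qed
  have dF: "(F has_real_derivative Fd k) (at k)" if k: "0 < k" "k < 1" for k
    by (rule has_field_derivative_transform_within_open[OF dF0[OF k], of "{0<..<1}"]) (use k in \<open>auto simp: F_def\<close>)
  define e :: "complex^'k" where "e = axis i0 1"
  have eB: "e \<in> Basis" unfolding e_def by (rule axis_in_Basis)
  have "continuous_on ann_open (dderiv e G)" using C2 eB unfolding C2_on_def by blast
  then obtain Ce where Ce: "\<forall>x\<in>ann. \<bar>dderiv e G x\<bar> \<le> Ce" using bound_on_ann by blast
  have "continuous_on ann_open G" using C2 unfolding C2_on_def by blast
  then obtain Mg where Mg: "\<forall>x\<in>ann. \<bar>G x\<bar> \<le> Mg" using bound_on_ann by blast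
  have Vdb: "\<bar>Vd k\<bar> * (2 * sqrt k * (1-k)) \<le> Ce" if k: "0 < k" "k < 1" for k
  proof -
    have "\<bar>Vd k * (2 * sqrt k * (1-k))\<bar> \<le> Ce"
      using V_diff(3)[OF ij C2 GV k] Ce ptv_ann[OF ij] k unfolding Vd_def e_def by simp
    thus ?thesis using k by (simp add: abs_mult)
  qed
  have Vb: "\<bar>V k\<bar> \<le> Mg" if k: "0 \<le> k" "k \<le> 1" for k
    using Mg ptv_ann[OF ij k] sph_ext_unit[OF norm_ptv[OF ij k]] unfolding V_def G_def by metis
  have phib: "\<bar>\<phi> k\<bar> \<le> 1" if k: "0 \<le> k" "k \<le> 1" for k
  proof -
    have rn: "real n > 0" using n2 by simp
    have "(real n+1)* k \<le> (real n+1)*1" using k by (intro mult_left_mono) auto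
    moreover have "(real n+1)* k \<ge> 0" using k by simp
    moreover have "real n \<ge> 1" using n2 by simp
    ultimately show ?thesis unfolding \<phi>_def using rn by (simp add: abs_le_iff field_simps)
  qed
  define g where "g = (\<lambda>k::real. 2* \<bar>Ce\<bar> * sqrt k*(1-k)^(n-1) + 4* k*(1-k)^n* \<bar>Mg\<bar> *\<phi>')"
  have phi'0: "\<phi>' \<ge> 0" unfolding \<phi>'_def by simp
  have Fb: "\<bar>F k\<bar> \<le> g k" if k: "0 \<le> k" "k \<le> 1" for k
  proof (cases "k \<in> {0<..<1}")
    case False
    have "g k \<ge> 0" unfolding g_def using k phi'0 by (intro add_nonneg_nonneg mult_nonneg_nonneg) auto
    thus ?thesis using False by (auto simp: F_def)
  next
    case True
    hence k': "0 < k" "k < 1" by auto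
    have pn: "(1-k)^n = (1-k)^(n-1) * (1-k)" using n2 by (cases n) auto
    have sq: "4* k = 2* sqrt k * (2 * sqrt k)"
    proof -
      have "sqrt k * sqrt k = k" using k' by simp
      thus ?thesis by (simp add: algebra_simps)
    qed
    have t1: "\<bar>4* k*(1-k)^n * (Vd k * \<phi> k)\<bar> \<le> 2* \<bar>Ce\<bar> * sqrt k*(1-k)^(n-1)"
    proof -
      have "\<bar>4* k*(1-k)^n * (Vd k * \<phi> k)\<bar> = (2* sqrt k*(1-k)^(n-1)) * ((\<bar>Vd k\<bar> * (2 * sqrt k * (1-k))) * \<bar>\<phi> k\<bar>)"
        using k' unfolding pn sq by (simp add: abs_mult mult_ac)
      also have "\<dots> \<le> (2* sqrt k*(1-k)^(n-1)) * (\<bar>Ce\<bar> * 1)"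
        using Vdb[OF k'] phib[OF k] k' by (intro mult_left_mono mult_mono) auto
      finally show ?thesis by (simp add: mult_ac)
    qed
    have t2: "\<bar>4* k*(1-k)^n * (V k * \<phi>')\<bar> \<le> 4* k*(1-k)^n* \<bar>Mg\<bar> *\<phi>'"
    proof -
      have "\<bar>4* k*(1-k)^n * (V k * \<phi>')\<bar> = 4* k*(1-k)^n * \<bar>V k\<bar> * \<phi>'"
        using k' phi'0 by (simp add: abs_mult)
      also have "\<dots> \<le> 4* k*(1-k)^n* \<bar>Mg\<bar> *\<phi>'"
        using Vb[OF k] k' phi'0 by (intro mult_right_mono mult_left_mono) auto
      finally show ?thesis .
    qed
    have "F k = 4* k*(1-k)^n * (Vd k * \<phi> k) - 4* k*(1-k)^n * (V k * \<phi>')"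
      using True by (simp add: F_def F0_def algebra_simps)
    thus ?thesis using t1 t2 unfolding g_def by linarith
  qed
  have gc: "isCont g x" for x unfolding g_def by (intro continuous_intros)
  have g0: "g 0 = 0" and g1: "g 1 = 0" unfolding g_def using n2 by (auto simp: power_0_left)
  have contF: "continuous_on {0..1} F"
  proof (unfold continuous_on_eq_continuous_within, intro ballI)
    fix x :: real assume x: "x \<in> {0..1}"
    show "continuous (at x within {0..1}) F"
    proof (cases "x \<in> {0<..<1}")
      case True
      hence "isCont F x" using dF DERIV_isCont by auto
      thus ?thesis by (rule continuous_at_imp_continuous_at_within)
    next
      case False
      hence x01: "x = 0 \<or> x = 1" and Fx: "F x = 0" using x by (auto simp: F_def)
      have gx: "(g \<longlongrightarrow> 0) (at x within {0..1})"
        using continuous_at_imp_continuous_at_within[OF gc[of x], of "{0..1}"] x01 g0 g1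
        unfolding continuous_within by auto
      have "eventually (\<lambda>y. norm (F y) \<le> g y) (at x within {0..1})"
        using Fb by (auto simp: eventually_at_filter)
      hence "(F \<longlongrightarrow> 0) (at x within {0..1})" using gx by (rule Lim_null_comparison)
      thus ?thesis unfolding continuous_within Fx .
    qed
  qed
  have "(Fd has_integral (F 1 - F 0)) {0..1}"
    by (rule fundamental_theorem_of_calculus_interior[OF _ contF])
       (use dF in \<open>auto simp: has_real_derivative_iff_has_vector_derivative[symmetric]\<close>)
  moreover have "F 1 - F 0 = 0" by (simp add: F_def)
  ultimately show ?thesis unfolding Fd_def V_def \<phi>_def by simp
qed

lemma dpow1: "((\<lambda>k::real. (1-k)^(Suc p)) has_real_derivative -(real (Suc p) * (1-x)^p)) (at x)"
proof -
  have d: "((\<lambda>k::real. 1-k) has_real_derivative -1) (at x)" by (auto intro!: derivative_eq_intros)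
  from DERIV_chain2[OF DERIV_pow d, of "Suc p"] show ?thesis by simp
qed

lemma int_phi3_aux:
  fixes m :: nat
  defines "N \<equiv> real (Suc m)"
  defines "H \<equiv> \<lambda>k::real. (-1/N^3) * (N^2 * (1-k)^(Suc m) + (-3*N^2) * (1-k)^(Suc (Suc m))
            + (3*N*(N+1)^2/(N+2)) * (1-k)^(Suc (Suc (Suc m))) + (0 - (N+1)^3/(N+3)) * (1-k)^(Suc (Suc (Suc (Suc m)))))"
  shows "(H has_real_derivative (1-x)^m * (((N+1)*x - 1)/N)^3) (at x)"
proof -
  have N0: "N > 0" unfolding N_def by simp
  have e1: "real (Suc (Suc m)) = N + 1" "real (Suc (Suc (Suc m))) = N + 2" "real (Suc (Suc (Suc (Suc m)))) = N + 3"
      "real (Suc m) = N" unfolding N_def by auto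
  have "(H has_real_derivative (-1/N^3) * (N^2 * (-(N * (1-x)^m)) + (-3*N^2) * (-((N+1) * (1-x)^(Suc m)))
            + (3*N*(N+1)^2/(N+2)) * (-((N+2) * (1-x)^(Suc (Suc m)))) + (0 - (N+1)^3/(N+3)) * (-((N+3) * (1-x)^(Suc (Suc (Suc m))))))) (at x)"
    unfolding H_def
    by (intro DERIV_cmult DERIV_add dpow1[of m x, unfolded e1] dpow1[of "Suc m" x, unfolded e1]
       dpow1[of "Suc (Suc m)" x, unfolded e1] dpow1[of "Suc (Suc (Suc m))" x, unfolded e1])
  moreover have "(-1/N^3) * (N^2 * (-(N * p)) + (-3*N^2) * (-((N+1) * (y * p)))
            + (3*N*(N+1)^2/(N+2)) * (-((N+2) * (y * (y * p)))) + (0 - (N+1)^3/(N+3)) * (-((N+3) * (y * (y * (y * p))))))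
       = p * (((N+1)*(1-y) - 1)/N)^3" for p y
  proof -
    define A where "A = 3*N*(N+1)^2/(N+2)"
    define B where "B = (N+1)^3/(N+3)"
    have hA: "A*(N+2) = 3*N*(N+1)^2" unfolding A_def using N0 by simp
    have hB: "B*(N+3) = (N+1)^3" unfolding B_def using N0 by simp
    have "(-1/N^3) * (N^2 * (-(N * p)) + (-3*N^2) * (-((N+1) * (y * p)))
            + A * (-((N+2) * (y * (y * p)))) + (0 - B) * (-((N+3) * (y * (y * (y * p))))))
        = (-1/N^3) * (-(N^3*p) + 3*N^2*(N+1)*(y*p) - (A*(N+2))*(y*(y*p)) + (B*(N+3))*(y*(y*(y*p))))"
      by (simp add: algebra_simps power3_eq_cube power2_eq_square)
    also have "\<dots> = p * (((N+1)*(1-y) - 1)/N)^3"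
      unfolding hA hB using N0 by (simp add: field_simps power2_eq_square power3_eq_cube)
    finally show ?thesis unfolding A_def B_def .
  qed
  ultimately show ?thesis by simp
qed

lemma int_phi3:
  assumes n2: "n \<ge> 2"
  shows "((\<lambda>k. (1-k)^(n-1) * (((real n+1)*k - 1)/real n)^3) has_integral
           (2*(real n - 1)/((real n+2)*(real n+3)*(real n)^3))) {0..1}"
proof -
  obtain m where nm: "n = Suc m" using n2 by (cases n) auto
  define N where "N = real (Suc m)"
  define H where "H = (\<lambda>k::real. (-1/N^3) * (N^2 * (1-k)^(Suc m) + (-3*N^2) * (1-k)^(Suc (Suc m))
            + (3*N*(N+1)^2/(N+2)) * (1-k)^(Suc (Suc (Suc m))) + (0 - (N+1)^3/(N+3)) * (1-k)^(Suc (Suc (Suc (Suc m))))))"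
  have d: "(H has_real_derivative (1-x)^m * (((N+1)*x - 1)/N)^3) (at x)" for x
    unfolding H_def N_def by (rule int_phi3_aux)
  have "((\<lambda>x. (1-x)^m * (((N+1)*x - 1)/N)^3) has_integral (H 1 - H 0)) {0..1}"
    by (rule fundamental_theorem_of_calculus)
       (auto intro: d has_field_derivative_at_within simp: has_real_derivative_iff_has_vector_derivative[symmetric])
  moreover have "H 1 - H 0 = 2*(N - 1)/((N+2)*(N+3)*N^3)"
  proof -
    have N0: "N > 0" unfolding N_def by simp
    hence nz: "N \<noteq> 0" "N + 2 \<noteq> 0" "N + 3 \<noteq> 0" by auto
    show ?thesis unfolding H_def using nz by (simp add: field_simps power2_eq_square power3_eq_cube)
  qed
  ultimately show ?thesis unfolding nm N_def by simp
qed

lemma supK_ge: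
  fixes f :: "'a::euclidean_space \<Rightarrow> real"
  assumes "continuous_on ann_open f" "x \<in> ann"
  shows "\<bar>f x\<bar> \<le> supK ann f"
proof -
  obtain M where M: "\<forall>x\<in>ann. \<bar>f x\<bar> \<le> M" using bound_on_ann[OF assms(1)] by blast
  have "bdd_above ((\<lambda>x. \<bar>f x\<bar>) ` ann)" using M by (auto intro!: bdd_aboveI)
  thus ?thesis unfolding supK_def using assms(2) by (auto intro: cSup_upper)
qed

lemma ann_nonempty: "\<exists>x::'a::euclidean_space. x \<in> ann \<and> -x \<in> ann \<and> x \<noteq> -x"
proof -
  obtain b :: 'a where "b \<in> Basis" using nonempty_Basis by blast
  hence "norm b = 1" by simp
  moreover have "b \<noteq> -b"
  proof
    assume "b = -b"
    hence "b + b = 0" by (metis add.right_inverse)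
    hence "2 *\<^sub>R b = 0" by (simp add: scaleR_2)
    hence "b = 0" by simp
    thus False using \<open>norm b = 1\<close> by simp
  qed
  ultimately show ?thesis unfolding ann_def by (intro exI[of _ b]) auto
qed

lemma supK_nonneg:
  fixes f :: "'a::euclidean_space \<Rightarrow> real"
  assumes "continuous_on ann_open f"
  shows "0 \<le> supK ann f"
proof -
  obtain x :: 'a where "x \<in> ann" using ann_nonempty by blast
  thus ?thesis using supK_ge[OF assms] by (meson abs_ge_zero order_trans)
qed

lemma holder_nonneg:
  fixes h :: "'a::euclidean_space \<Rightarrow> real"
  assumes "bdd_above (holder_quots \<alpha> ann h)"
  shows "0 \<le> Sup (holder_quots \<alpha> ann h)"
proof -
  obtain x :: 'a where x: "x \<in> ann" "-x \<in> ann" "x \<noteq> -x" using ann_nonempty by blast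
  hence m: "\<bar>h x - h (-x)\<bar> / (dist x (-x) powr \<alpha>) \<in> holder_quots \<alpha> ann h"
    unfolding holder_quots_def by blast
  have "0 \<le> \<bar>h x - h (-x)\<bar> / (dist x (-x) powr \<alpha>)" by simp
  also have "\<dots> \<le> Sup (holder_quots \<alpha> ann h)" using cSup_upper[OF m assms] .
  finally show ?thesis .
qed

lemma hnorm_bound:
  fixes u :: "'a::euclidean_space \<Rightarrow> real"
  assumes uC: "u \<in> C2a \<alpha>" and x: "norm x = 1"
  shows "\<bar>u x\<bar> \<le> hnorm \<alpha> u"
proof -
  have C2: "C2_on (sph_ext u) ann_open" and H: "\<forall>b\<in>Basis. \<forall>c\<in>Basis. bdd_above (holder_quots \<alpha> ann (dderiv c (dderiv b (sph_ext u))))"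
    using uC unfolding C2a_def by auto
  have c0: "continuous_on ann_open (sph_ext u)" using C2 unfolding C2_on_def by blast
  have c1: "\<And>b. b \<in> Basis \<Longrightarrow> continuous_on ann_open (dderiv b (sph_ext u))" using C2 unfolding C2_on_def by blast
  have c2: "\<And>b c. b \<in> Basis \<Longrightarrow> c \<in> Basis \<Longrightarrow> continuous_on ann_open (dderiv c (dderiv b (sph_ext u)))"
    using C2 unfolding C2_on_def by blast
  have s1: "0 \<le> (\<Sum>b\<in>Basis. supK ann (dderiv b (sph_ext u)))"
    by (intro sum_nonneg supK_nonneg c1)
  have s2: "0 \<le> (\<Sum>b\<in>Basis. \<Sum>c\<in>Basis. supK ann (dderiv c (dderiv b (sph_ext u))) +
        Sup (holder_quots \<alpha> ann (dderiv c (dderiv b (sph_ext u)))))"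
    using H by (intro sum_nonneg add_nonneg_nonneg supK_nonneg c2 holder_nonneg) auto
  have xa: "x \<in> ann" using x unfolding ann_def by simp
  have "\<bar>u x\<bar> \<le> supK ann (sph_ext u)" using supK_ge[OF c0 xa] sph_ext_unit[OF x] by simp
  thus ?thesis unfolding hnorm_def using s1 s2 by linarith
qed

lemma phi1_ptv: "i0 \<noteq> j \<Longrightarrow> 0 \<le> k \<Longrightarrow> k \<le> 1 \<Longrightarrow> phi1 n i0 (ptv i0 j k) = ((real n+1)*k - 1)/real n"
proof -
  assume a: "i0 \<noteq> j" "0 \<le> k" "k \<le> 1"
  have "phi1 n i0 (ptv i0 j k) = (real n+1)/real n * k - 1/real n"
    using a by (simp add: phi1_def fdist_def ptv_nth_i0 cos_arccos_abs)
  also have "\<dots> = ((real n+1)*k - 1)/real n" by (simp add: diff_divide_distrib)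
  finally show ?thesis .
qed

lemma pointwise_est:
  fixes s ls l1 q K th eps w ph b :: real
  assumes s0: "s \<noteq> 0" and sth: "\<bar>s\<bar> \<le> th" and th4: "th \<le> 1/4"
    and K0: "0 \<le> K" and E: "\<forall>v. \<bar>v\<bar> \<le> 1/2 \<longrightarrow> abs (Nf q v + (q-2)* v + (q-1)*(q-2)/2* v^2) \<le> K * \<bar>v\<bar>^3"
    and lth: "\<bar>ls - l1\<bar> \<le> th" and rth: "\<bar>(ls - l1)/s\<bar> \<le> th"
    and bb: "\<bar>b\<bar> \<le> eps * \<bar>s\<bar>" and eth: "eps \<le> th"
    and l10: "0 \<le> l1" and q2: "2 < q"
    and w1: "\<bar>w\<bar> \<le> 1" and p1: "\<bar>ph\<bar> \<le> 1"
  shows "\<bar>w* ph*(ls * Nf q (s* ph + b) + l1*(q-2)*(s* ph + b))/s^2 - (-l1*(q-1)*(q-2)/2)*(w* ph^3)\<bar>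
     \<le> th*(2*(q-2) + 2*(q-1)*(q-2) + 2* l1*(q-1)*(q-2) + 8* K*(l1+1))"
proof -
  define v where "v = s* ph + b"
  define d where "d = b/s"
  define u where "u = ph + d"
  define \<rho> where "\<rho> = (ls - l1)/s"
  define Ev where "Ev = Nf q v + (q-2)* v + (q-1)*(q-2)/2* v^2"
  define c where "c = (q-1)*(q-2)/2"
  have c0: "c \<ge> 0" unfolding c_def using q2 by simp
  have sp: "\<bar>s\<bar> > 0" using s0 by simp
  have "0 \<le> eps * \<bar>s\<bar>" using bb by (meson abs_ge_zero order_trans)
  hence eps0: "eps \<ge> 0" using sp by (simp add: zero_le_mult_iff)
  have th0: "th \<ge> 0" using sth by simp
  have dd: "\<bar>d\<bar> \<le> th"
  proof -
    have "\<bar>d\<bar> = \<bar>b\<bar>/\<bar>s\<bar>" unfolding d_def by (simp add: abs_divide)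
    also have "\<dots> \<le> eps" using bb sp by (simp add: divide_le_eq)
    finally show ?thesis using eth by simp
  qed
  have vu: "v = s* u" unfolding v_def u_def d_def using s0 by (simp add: field_simps)
  have "\<bar>u\<bar> \<le> \<bar>ph\<bar> + \<bar>d\<bar>" unfolding u_def by (rule abs_triangle_ineq)
  hence u2: "\<bar>u\<bar> \<le> 2" using dd p1 th4 by linarith
  have v2: "\<bar>v\<bar> \<le> 1/2"
  proof -
    have "\<bar>v\<bar> = \<bar>s\<bar>*\<bar>u\<bar>" unfolding vu by (simp add: abs_mult)
    also have "\<dots> \<le> (1/4)*2" using sth th4 u2 by (intro mult_mono) auto
    finally show ?thesis by simp
  qed
  have Evb: "\<bar>Ev\<bar> \<le> K*(\<bar>s\<bar>^2*(8*\<bar>s\<bar>))"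
  proof -
    have h1: "\<bar>Ev\<bar> \<le> K*\<bar>v\<bar>^3" using E v2 unfolding Ev_def by blast
    have g: "(a*x)^3 = a^2*(a*x^3)" for a x :: real by (simp add: power2_eq_square power3_eq_cube)
    have h2: "\<bar>v\<bar>^3 = \<bar>s\<bar>^2*(\<bar>s\<bar>*\<bar>u\<bar>^3)" unfolding vu abs_mult by (rule g)
    have h3: "\<bar>s\<bar>^2*(\<bar>s\<bar>*\<bar>u\<bar>^3) \<le> \<bar>s\<bar>^2*(8*\<bar>s\<bar>)"
    proof -
      have "\<bar>u\<bar>^3 \<le> 2^3" using u2 by (intro power_mono) auto
      hence "\<bar>s\<bar>*\<bar>u\<bar>^3 \<le> \<bar>s\<bar>*8" by (intro mult_left_mono) auto
      thus ?thesis by (intro mult_left_mono) (auto simp: mult.commute)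
    qed
    have "K*\<bar>v\<bar>^3 \<le> K*(\<bar>s\<bar>^2*(8*\<bar>s\<bar>))" unfolding h2 using h3 K0 by (rule mult_left_mono)
    thus ?thesis using h1 by linarith
  qed
  have iden: "w* ph*(ls * Nf q (s* ph + b) + l1*(q-2)*(s* ph + b))/s^2 - (-l1*(q-1)*(q-2)/2)*(w* ph^3)
     = w* ph*(ls*(Ev/s^2) - \<rho>*(q-2)* u - (ls-l1)* c* u^2 - l1* c*(u^2 - ph^2))"
  proof -
    have N: "Nf q v = Ev - (q-2)* v - c* v^2" unfolding Ev_def c_def by simp
    have ls: "ls = l1 + \<rho>* s" unfolding \<rho>_def using s0 by simp
    show ?thesis unfolding v_def[symmetric] N unfolding vu ls c_def using s0
      by (simp add: field_simps power2_eq_square power3_eq_cube)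
  qed
  have b1: "\<bar>ls*(Ev/s^2)\<bar> \<le> th*(8* K*(l1+1))"
  proof -
    have "\<bar>ls\<bar> \<le> l1 + 1" using lth th4 l10 by linarith
    moreover have "\<bar>Ev/s^2\<bar> \<le> 8* K* th"
    proof -
      have "\<bar>Ev/s^2\<bar> = \<bar>Ev\<bar>/\<bar>s\<bar>^2" by (simp add: abs_divide)
      also have "\<dots> \<le> K*(8*\<bar>s\<bar>)" using Evb sp by (simp add: divide_le_eq mult_ac)
      also have "\<dots> \<le> 8* K* th" using K0 sth by (simp add: mult_left_mono)
      finally show ?thesis .
    qed
    ultimately have "\<bar>ls\<bar>*\<bar>Ev/s^2\<bar> \<le> (l1+1)*(8* K* th)" using K0 th0
      by (intro mult_mono) auto
    thus ?thesis by (simp add: abs_mult mult_ac)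
  qed
  have b2: "\<bar>\<rho>*(q-2)* u\<bar> \<le> th*(2*(q-2))"
  proof -
    have "\<bar>\<rho>*(q-2)* u\<bar> = \<bar>\<rho>\<bar>*((q-2)*\<bar>u\<bar>)" using q2 by (simp add: abs_mult)
    also have "\<dots> \<le> th*((q-2)*2)" using rth u2 q2 th0 unfolding \<rho>_def by (intro mult_mono) auto
    finally show ?thesis by (simp add: mult.commute)
  qed
  have b3: "\<bar>(ls-l1)* c* u^2\<bar> \<le> th*(2*(q-1)*(q-2))"
  proof -
    have "\<bar>(ls-l1)* c* u^2\<bar> = \<bar>ls-l1\<bar>*(c*\<bar>u\<bar>^2)" using c0 by (simp add: abs_mult power_abs)
    also have "\<dots> \<le> th*(c*2^2)" using lth u2 c0 by (intro mult_mono mult_left_mono power_mono) auto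
    finally show ?thesis unfolding c_def by (simp add: algebra_simps)
  qed
  have b4: "\<bar>l1* c*(u^2 - ph^2)\<bar> \<le> th*(2* l1*(q-1)*(q-2))"
  proof -
    have "u^2 - ph^2 = d*(2* ph + d)" unfolding u_def by (simp add: power2_eq_square algebra_simps)
    hence "\<bar>u^2 - ph^2\<bar> = \<bar>d\<bar>*\<bar>2* ph + d\<bar>" by (simp add: abs_mult)
    also have "\<dots> \<le> th*3"
    proof -
      have "\<bar>2* ph + d\<bar> \<le> \<bar>2* ph\<bar> + \<bar>d\<bar>" by (rule abs_triangle_ineq)
      hence "\<bar>2* ph + d\<bar> \<le> 3" using dd p1 th4 by simp
      thus ?thesis using dd th0 by (intro mult_mono) auto
    qed
    finally have "\<bar>u^2 - ph^2\<bar> \<le> th*3" .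
    hence "\<bar>l1* c*(u^2 - ph^2)\<bar> \<le> l1* c*(th*3)" using l10 c0 by (simp add: abs_mult mult_left_mono)
    also have "\<dots> \<le> th*(2* l1*(q-1)*(q-2))"
    proof -
      have P0: "0 \<le> l1*th*((q-1)*(q-2))" using l10 th0 q2 by (intro mult_nonneg_nonneg) auto
      have "l1* c*(th*3) = 3/2*(l1*th*((q-1)*(q-2)))" "th*(2* l1*(q-1)*(q-2)) = 2*(l1*th*((q-1)*(q-2)))"
        unfolding c_def by (simp_all add: field_simps)
      thus ?thesis using P0 by linarith
    qed
    finally show ?thesis .
  qed
  have "\<bar>w* ph*(ls*(Ev/s^2) - \<rho>*(q-2)* u - (ls-l1)* c* u^2 - l1* c*(u^2 - ph^2))\<bar>
      \<le> \<bar>ls*(Ev/s^2) - \<rho>*(q-2)* u - (ls-l1)* c* u^2 - l1* c*(u^2 - ph^2)\<bar>"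
  proof -
    have "\<bar>w* ph\<bar> \<le> 1" using w1 p1 by (simp add: abs_mult mult_le_one)
    thus ?thesis by (simp add: abs_mult mult_left_le_one_le)
  qed
  also have "\<dots> \<le> th*(8* K*(l1+1)) + th*(2*(q-2)) + th*(2*(q-1)*(q-2)) + th*(2* l1*(q-1)*(q-2))"
    using b1 b2 b3 b4 by linarith
  also have "\<dots> = th*(2*(q-2) + 2*(q-1)*(q-2) + 2* l1*(q-1)*(q-2) + 8* K*(l1+1))" by (simp add: algebra_simps)
  finally show ?thesis unfolding iden .
qed

theorem lemma6p1:
  fixes n :: nat and q \<alpha> \<delta> :: real and i0 :: "'k::finite"
    and w \<beta> :: "real \<Rightarrow> complex^'k \<Rightarrow> real" and lam :: "real \<Rightarrow> real"
    and M :: "(complex^'k \<Rightarrow> real) set"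
  assumes "CARD('k) = n + 1" and "n \<ge> 2"
    and "2 < q" and "q < 2 * real n / (real n - 1)"
    and "0 < \<alpha>" and "\<alpha> < 1" and "0 < \<delta>"
    and sol: "\<forall>s\<in>{-\<delta><..<\<delta>}. w s \<in> C2a \<alpha> \<inter> XI i0 \<and> lam s \<ge> 0 \<and>
                 (\<forall>x\<in>sphere 0 1. S_op q (w s) (lam s) x = 0)"
    and nontriv: "\<forall>s\<in>{-\<delta><..<\<delta>}. s \<noteq> 0 \<longrightarrow> (\<exists>x\<in>sphere 0 1. w s x \<noteq> 0)"
    and diff: "\<forall>s\<in>{-\<delta><..<\<delta>}. lam differentiable (at s) \<and> hdiff \<alpha> i0 w s"
    and decomp: "\<forall>s\<in>{-\<delta><..<\<delta>}. \<forall>x\<in>sphere 0 1. w s x = s * phi1 n i0 x + \<beta> s x"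
    and compl: "is_complement \<alpha> i0 M (phi1 n i0)" and "\<forall>s\<in>{-\<delta><..<\<delta>}. \<beta> s \<in> M"
    and "lam 0 = 4 * (real n + 1) / (q - 2)"
    and "\<forall>x\<in>sphere 0 1. \<beta> 0 x = 0"
    and "((\<lambda>s. hnorm \<alpha> (\<beta> s) / \<bar>s\<bar>) \<longlongrightarrow> 0) (at 0)"
  shows "deriv lam 0 \<noteq> 0"
proof
  assume D0: "deriv lam 0 = 0"
  note card = assms(1) and n2 = assms(2) and q2 = assms(3) and d0 = assms(7)
  note bM = assms(13) and lam0 = assms(14) and epsl = assms(16)
  define l1 where "l1 = lam 0"
  have l1pos: "l1 > 0" unfolding l1_def lam0 using q2 by simp
  have l1q: "4*(real n+1) = l1*(q-2)" unfolding l1_def lam0 using q2 by simp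
  obtain j :: 'k where ij: "i0 \<noteq> j"
  proof -
    have "\<not> (\<forall>j::'k. j = i0)"
    proof
      assume h: "\<forall>j::'k. j = i0"
      hence "(UNIV :: 'k set) = {i0}" by auto
      hence "card (UNIV :: 'k set) = card {i0}" by (rule arg_cong)
      hence "CARD('k) = 1" by simp
      thus False using card n2 by simp
    qed
    thus ?thesis using that by (metis (full_types))
  qed
  have "lam differentiable (at 0)" using diff d0 by simp
  hence "(lam has_real_derivative deriv lam 0) (at 0)" by (simp add: DERIV_deriv_iff_real_differentiable)
  hence lamd: "(lam has_real_derivative 0) (at 0)" using D0 by simp
  have rho: "((\<lambda>s. (lam s - l1)/s) \<longlongrightarrow> 0) (at 0)"
    using lamd unfolding DERIV_def l1_def by simp
  have lamc: "((\<lambda>s. lam s - l1) \<longlongrightarrow> 0) (at 0)"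
  proof -
    have "isCont lam 0" using lamd by (rule DERIV_isCont)
    hence "(lam \<longlongrightarrow> l1) (at 0)" unfolding isCont_def l1_def .
    thus ?thesis by (simp add: LIM_zero)
  qed
  obtain K0 where K0: "\<forall>v::real. \<bar>v\<bar> \<le> 1/2 \<longrightarrow> abs (Nf q v + (q-2)* v + (q-1)*(q-2)/2* v^2) \<le> K0 * \<bar>v\<bar>^3"
    using taylorN[of q] by blast
  define K where "K = \<bar>K0\<bar>"
  have KK: "\<forall>v::real. \<bar>v\<bar> \<le> 1/2 \<longrightarrow> abs (Nf q v + (q-2)* v + (q-1)*(q-2)/2* v^2) \<le> K * \<bar>v\<bar>^3"
  proof (intro allI impI)
    fix v :: real assume "\<bar>v\<bar> \<le> 1/2"
    hence "abs (Nf q v + (q-2)* v + (q-1)*(q-2)/2* v^2) \<le> K0 * \<bar>v\<bar>^3" using K0 by blast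
    also have "\<dots> \<le> K * \<bar>v\<bar>^3" unfolding K_def by (intro mult_right_mono) auto
    finally show "abs (Nf q v + (q-2)* v + (q-1)*(q-2)/2* v^2) \<le> K * \<bar>v\<bar>^3" .
  qed
  have Kn: "0 \<le> K" unfolding K_def by simp
  define Kt where "Kt = 2*(q-2) + 2*(q-1)*(q-2) + 2* l1*(q-1)*(q-2) + 8* K*(l1+1)"
  have Kt0: "Kt \<ge> 0" unfolding Kt_def using q2 l1pos Kn by (intro add_nonneg_nonneg mult_nonneg_nonneg) auto
  define \<phi> where "\<phi> = (\<lambda>k::real. ((real n+1)* k - 1)/real n)"
  define c0 where "c0 = -l1*(q-1)*(q-2)/2"
  define val where "val = 2*(real n - 1)/((real n+2)*(real n+3)*(real n)^3)"
  define IT where "IT = c0 * val"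
  have IT0: "IT \<noteq> 0" unfolding IT_def c0_def val_def using l1pos q2 n2 by simp
  define th where "th = min (1/4) (\<bar>IT\<bar>/(2*(Kt+1)))"
  have th0: "th > 0" unfolding th_def using IT0 Kt0 by simp
  have th4: "th \<le> 1/4" unfolding th_def by (rule min.cobounded1)
  have thKt: "th * Kt < \<bar>IT\<bar>"
  proof -
    have "th * Kt \<le> \<bar>IT\<bar>/(2*(Kt+1)) * Kt" unfolding th_def using Kt0 by (intro mult_right_mono) auto
    also have "\<dots> < \<bar>IT\<bar>" using IT0 Kt0 by (simp add: field_simps add_nonneg_pos mult_nonneg_nonneg)
    finally show ?thesis .
  qed
  have ev: "eventually (\<lambda>s. \<bar>(lam s - l1)/s\<bar> < th \<and> \<bar>lam s - l1\<bar> < th \<and> \<bar>hnorm \<alpha> (\<beta> s) / \<bar>s\<bar>\<bar> < th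
      \<and> \<bar>s\<bar> < th \<and> \<bar>s\<bar> < \<delta>) (at 0)"
  proof -
    have e1: "eventually (\<lambda>s. \<bar>(lam s - l1)/s\<bar> < th) (at 0)"
      using tendstoD[OF rho th0] by (simp add: dist_real_def)
    have e2: "eventually (\<lambda>s. \<bar>lam s - l1\<bar> < th) (at 0)"
      using tendstoD[OF lamc th0] by (simp add: dist_real_def)
    have e3: "eventually (\<lambda>s. \<bar>hnorm \<alpha> (\<beta> s) / \<bar>s\<bar>\<bar> < th) (at 0)"
      using tendstoD[OF epsl th0] by (simp add: dist_real_def)
    have id: "((\<lambda>s::real. s) \<longlongrightarrow> 0) (at 0)" by (rule tendsto_ident_at)
    have e4: "eventually (\<lambda>s. \<bar>s\<bar> < th) (at 0)"
      using tendstoD[OF id th0] by (simp add: dist_real_def)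
    have e5: "eventually (\<lambda>s. \<bar>s\<bar> < \<delta>) (at 0)"
      using tendstoD[OF id d0] by (simp add: dist_real_def)
    show ?thesis by (intro eventually_conj e1 e2 e3 e4 e5)
  qed
  then obtain dd where dd: "dd > 0" "\<forall>s. s \<noteq> 0 \<and> dist s 0 < dd \<longrightarrow>
      \<bar>(lam s - l1)/s\<bar> < th \<and> \<bar>lam s - l1\<bar> < th \<and> \<bar>hnorm \<alpha> (\<beta> s) / \<bar>s\<bar>\<bar> < th \<and> \<bar>s\<bar> < th \<and> \<bar>s\<bar> < \<delta>"
    unfolding eventually_at by auto
  define s where "s = dd/2"
  have s0: "s \<noteq> 0" and sP: "\<bar>(lam s - l1)/s\<bar> < th" "\<bar>lam s - l1\<bar> < th" "\<bar>hnorm \<alpha> (\<beta> s) / \<bar>s\<bar>\<bar> < th"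
    "\<bar>s\<bar> < th" "\<bar>s\<bar> < \<delta>"
  proof -
    have sc: "s \<noteq> 0 \<and> dist s 0 < dd" using dd(1) unfolding s_def by (auto simp: dist_real_def)
    thus "s \<noteq> 0" by simp
    have "\<bar>(lam s - l1)/s\<bar> < th \<and> \<bar>lam s - l1\<bar> < th \<and> \<bar>hnorm \<alpha> (\<beta> s) / \<bar>s\<bar>\<bar> < th \<and> \<bar>s\<bar> < th \<and> \<bar>s\<bar> < \<delta>"
      using dd(2) sc by blast
    thus "\<bar>(lam s - l1)/s\<bar> < th" "\<bar>lam s - l1\<bar> < th" "\<bar>hnorm \<alpha> (\<beta> s) / \<bar>s\<bar>\<bar> < th"
      "\<bar>s\<bar> < th" "\<bar>s\<bar> < \<delta>" by auto
  qed
  have sd: "s \<in> {-\<delta><..<\<delta>}" using sP(5) by auto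
  have ws: "w s \<in> C2a \<alpha>" "w s \<in> XI i0" and eqs: "\<forall>x\<in>sphere 0 1. S_op q (w s) (lam s) x = 0"
    using sol sd by auto
  have bC: "\<beta> s \<in> C2a \<alpha>" using compl bM sd unfolding is_complement_def by auto
  define wt where "wt = (\<lambda>k::real. (1-k)^(n-1))"
  define Phi where "Phi = (\<lambda>k. (1-k)^(n-1) * (((real n+1)* k - 1)/real n) * (lam s * Nf q (w s (ptv i0 j k)) + 4*(real n+1) * w s (ptv i0 j k)))"
  have I1: "(Phi has_integral 0) {0..1}"
    unfolding Phi_def by (rule wronsk[OF ij card n2 ws eqs])
  hence I2: "((\<lambda>k. Phi k / s^2) has_integral 0) {0..1}" using has_integral_divide[OF I1, of "s^2"] by simp
  define T where "T = (\<lambda>k. c0 * (wt k * \<phi> k ^ 3))"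
  have I3: "(T has_integral IT) {0..1}"
    unfolding T_def IT_def wt_def \<phi>_def val_def
    using has_integral_mult_right[OF int_phi3[OF n2], of c0] by simp
  have I4: "((\<lambda>k. Phi k / s^2 - T k) has_integral (0 - IT)) {0..1}"
    by (rule has_integral_diff[OF I2 I3])
  have bnd: "norm (Phi k / s^2 - T k) \<le> th * Kt" if k: "k \<in> cbox 0 1" for k
  proof -
    from k have k01: "0 \<le> k" "k \<le> 1" by auto
    have sph: "ptv i0 j k \<in> sphere 0 1" using norm_ptv[OF ij k01] by simp
    have wdec: "w s (ptv i0 j k) = s * \<phi> k + \<beta> s (ptv i0 j k)"
      using decomp sd sph phi1_ptv[OF ij k01, of n] unfolding \<phi>_def by auto
    have w1: "\<bar>wt k\<bar> \<le> 1" unfolding wt_def using k01 by (simp add: power_le_one)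
    have p1: "\<bar>\<phi> k\<bar> \<le> 1"
    proof -
      have rn: "real n > 0" using n2 by simp
      have "(real n+1)* k \<le> (real n+1)*1" using k01 by (intro mult_left_mono) auto
      moreover have "(real n+1)* k \<ge> 0" using k01 by simp
      moreover have "real n \<ge> 1" using n2 by simp
      ultimately show ?thesis unfolding \<phi>_def using rn by (simp add: abs_le_iff field_simps)
    qed
    have bb: "\<bar>\<beta> s (ptv i0 j k)\<bar> \<le> (hnorm \<alpha> (\<beta> s) / \<bar>s\<bar>) * \<bar>s\<bar>"
      using hnorm_bound[OF bC, of "ptv i0 j k"] norm_ptv[OF ij k01] s0 by simp
    have eth: "hnorm \<alpha> (\<beta> s) / \<bar>s\<bar> \<le> th"
    proof -
      have "hnorm \<alpha> (\<beta> s) / \<bar>s\<bar> \<le> \<bar>hnorm \<alpha> (\<beta> s) / \<bar>s\<bar>\<bar>" by (rule abs_ge_self)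
      thus ?thesis using sP(3) by linarith
    qed
    have est: "\<bar>wt k * \<phi> k * (lam s * Nf q (s * \<phi> k + \<beta> s (ptv i0 j k)) + l1*(q-2)*(s * \<phi> k + \<beta> s (ptv i0 j k)))/s^2
        - (-l1*(q-1)*(q-2)/2)*(wt k * \<phi> k^3)\<bar> \<le> th * Kt"
      unfolding Kt_def
      by (rule pointwise_est[OF s0 _ th4 Kn KK _ _ bb eth _ q2 w1 p1]) (use sP l1pos in auto)
    have "Phi k = wt k * \<phi> k * (lam s * Nf q (s * \<phi> k + \<beta> s (ptv i0 j k)) + l1*(q-2)*(s * \<phi> k + \<beta> s (ptv i0 j k)))"
      unfolding Phi_def wt_def \<phi>_def[symmetric] wdec l1q by (simp add: \<phi>_def)
    moreover have "T k = (-l1*(q-1)*(q-2)/2)*(wt k * \<phi> k^3)" unfolding T_def c0_def by simp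
    ultimately show ?thesis using est by simp
  qed
  have I4': "((\<lambda>k. Phi k / s^2 - T k) has_integral (0 - IT)) (cbox 0 1)" using I4 by (simp add: cbox_interval)
  have "norm (0 - IT) \<le> th * Kt"
    using has_integral_bound[OF _ I4' bnd] th0 Kt0 by (simp add: cbox_interval)
  hence "\<bar>IT\<bar> \<le> th * Kt" by simp
  thus False using thKt by simp
qed

end
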